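(* Let $\Gamma$ be a rationally metrised graph and $N\colon\mathrm H^1(\Gamma)\xrightarrow{\sim}\mathrm H_1(\Gamma)$ the isomorphism induced by the cycle pairing. For every edge $e$ of $\Gamma$, \[N(e^* )=\sum_{e'\in E^+}\lambda_{e,e'}\,e'\in\mathbb Q\cdot E^\pm,\qquad \lambda_{e,e'}=\begin{cases}\frac1{\ell(e)}-\frac{\langle\partial(e),\partial(e)\rangle}{\ell(e)^2}&\text{if }e'=e,\\ -\frac{\langle\partial(e),\partial(e')\rangle}{\ell(e)\ell(e')}&\text{if }e'\ne e^{\pm1}.\end{cases}\]
   Context: Rationally metrised graph: finite sets of vertices $V$, oriented edges $E$, half-edges, source $s$, fixed-point-free involution $e\mapsto e^{-1}$ on $E$, $t(e)=s(e^{-1})$, connected, lengths $\ell(e)=\ell(e^{-1})\in\mathbb Q_{>0}$. $E^+$ is the set of unoriented edges ($E$ modulo $e\sim e^{-1}$), each represented by a chosen orientation. $\mathbb Q\cdot E^\pm$ is the span of $E$ mod $e^{-1}=-e$ with edges orthogonal and $\langle e,e\rangle=\ell(e)$; $\partial(e)=t(e)-s(e)\in\mathrm{Div}^0(\Gamma)$ (divisors of total mass $0$); $\mathrm H_1(\Gamma)=\ker\partial$ with restricted (cycle) pairing and $\mathrm H^1(\Gamma)=\mathrm{Hom}(\mathrm H_1(\Gamma),\mathbb Q)$; $N(\xi)$ is the unique class with $\langle N(\xi),\omega\rangle=\xi(\omega)$ for all $\omega\in\mathrm H_1$. $e^*\in\mathrm H^1(\Gamma)$ gives the multiplicity of $e$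 in a homology class. $\langle\cdot,\cdot\rangle$ on $\mathrm{Div}^0$ is the height pairing ${}^t\mathbf uL^{-1}\mathbf v$ with $L$ the Laplacian matrix ($L_{uu}=\sum_{s(e)=u\ne t(e)}1/\ell(e)$, $L_{uv}=-\sum_{s(e)=u,t(e)=v}1/\ell(e)$ for $u\neq v$). *)

theory Defs
  imports Complex_Main
begin

text \<open>A rationally metrised graph is given by a finite vertex set V, a finite set E of
  oriented edges, a source map src, a fixed-point-free involution iv on E
  (e maps to e^{-1}) and a length function len with values in the positive rationals,
  invariant under inversion.\<close>

definition tgt :: "('e \<Rightarrow> 'v) \<Rightarrow> ('e \<Rightarrow> 'e) \<Rightarrow> 'e \<Rightarrow> 'v" where
  "tgt src iv e = src (iv e)"

definition rmgraph ::
  "'v set \<Rightarrow> 'e set \<Rightarrow> ('e \<Rightarrow> 'v) \<Rightarrow> ('e \<Rightarrow> 'e) \<Rightarrow> ('e \<Rightarrow> rat) \<Rightarrow> bool" where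
  "rmgraph V E src iv len \<longleftrightarrow>
     finite V \<and> finite E \<and> V \<noteq> {} \<and>
     (\<forall>e\<in>E. src e \<in> V) \<and>
     (\<forall>e\<in>E. iv e \<in> E \<and> iv (iv e) = e \<and> iv e \<noteq> e) \<and>
     (\<forall>e\<in>E. len e > 0 \<and> len (iv e) = len e) \<and>
     (\<forall>u\<in>V. \<forall>v\<in>V. (u, v) \<in> {(src e, tgt src iv e) | e. e \<in> E}\<^sup>*)"

text \<open>Elements of Q.E^{\<plusminus>}: rational functions on E, antisymmetric under inversion
  (e^{-1} = -e), vanishing outside E.  The element sum_{e\<in>E^+} c_e e corresponds to the
  function taking value c_e at the chosen orientation e and -c_e at e^{-1}.\<close>

definition chains :: "'e set \<Rightarrow> ('e \<Rightarrow> 'e) \<Rightarrow> ('e \<Rightarrow> rat) set" where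
  "chains E iv = {c. (\<forall>e\<in>E. c (iv e) = - c e) \<and> (\<forall>e. e \<notin> E \<longrightarrow> c e = 0)}"

text \<open>Pairing on Q.E^{\<plusminus>}: edges orthogonal, <e,e> = len e.  Summing over all oriented
  edges counts every unoriented edge twice, hence the factor 1/2.\<close>

definition edge_pairing :: "'e set \<Rightarrow> ('e \<Rightarrow> rat) \<Rightarrow> ('e \<Rightarrow> rat) \<Rightarrow> ('e \<Rightarrow> rat) \<Rightarrow> rat" where
  "edge_pairing E len c d = (\<Sum>e\<in>E. len e * c e * d e) / 2"

definition bdry_edge :: "('e \<Rightarrow> 'v) \<Rightarrow> ('e \<Rightarrow> 'e) \<Rightarrow> 'e \<Rightarrow> 'v \<Rightarrow> rat" where
  "bdry_edge src iv e = (\<lambda>x. (if x = tgt src iv e then 1 else 0) - (if x = src e then 1 else 0))"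

text \<open>Boundary of a chain, extended linearly (again each unoriented edge counted twice).\<close>

definition bdry :: "'e set \<Rightarrow> ('e \<Rightarrow> 'v) \<Rightarrow> ('e \<Rightarrow> 'e) \<Rightarrow> ('e \<Rightarrow> rat) \<Rightarrow> 'v \<Rightarrow> rat" where
  "bdry E src iv c = (\<lambda>x. (\<Sum>e\<in>E. c e * bdry_edge src iv e x) / 2)"

definition H1 :: "'e set \<Rightarrow> ('e \<Rightarrow> 'v) \<Rightarrow> ('e \<Rightarrow> 'e) \<Rightarrow> ('e \<Rightarrow> rat) set" where
  "H1 E src iv = {c \<in> chains E iv. \<forall>x. bdry E src iv c x = 0}"

definition Nmap :: "'e set \<Rightarrow> ('e \<Rightarrow> 'v) \<Rightarrow> ('e \<Rightarrow> 'e) \<Rightarrow> ('e \<Rightarrow> rat)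
                    \<Rightarrow> (('e \<Rightarrow> rat) \<Rightarrow> rat) \<Rightarrow> ('e \<Rightarrow> rat)" where
  "Nmap E src iv len xi = (THE c. c \<in> H1 E src iv \<and>
      (\<forall>w\<in>H1 E src iv. edge_pairing E len c w = xi w))"

definition edge_dual :: "'e \<Rightarrow> ('e \<Rightarrow> rat) \<Rightarrow> rat" where
  "edge_dual e = (\<lambda>w. w e)"

definition laplacian :: "'e set \<Rightarrow> ('e \<Rightarrow> 'v) \<Rightarrow> ('e \<Rightarrow> 'e) \<Rightarrow> ('e \<Rightarrow> rat) \<Rightarrow> 'v \<Rightarrow> 'v \<Rightarrow> rat" where
  "laplacian E src iv len u v =
     (if u = v then (\<Sum>e\<in>{e\<in>E. src e = u \<and> tgt src iv e \<noteq> u}. 1 / len e)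
      else - (\<Sum>e\<in>{e\<in>E. src e = u \<and> tgt src iv e = v}. 1 / len e))"

text \<open>Height pairing on Div^0: <u, v> = u^T L^{-1} v, where L^{-1} v denotes a solution w of
  L w = v (which exists for v of total mass 0 on a connected graph; the value is independent
  of the choice since u has total mass 0).\<close>

definition height_pairing :: "'v set \<Rightarrow> 'e set \<Rightarrow> ('e \<Rightarrow> 'v) \<Rightarrow> ('e \<Rightarrow> 'e) \<Rightarrow> ('e \<Rightarrow> rat)
                               \<Rightarrow> ('v \<Rightarrow> rat) \<Rightarrow> ('v \<Rightarrow> rat) \<Rightarrow> rat" where
  "height_pairing V E src iv len u v =
     (let w = (SOME w. \<forall>x\<in>V. (\<Sum>y\<in>V. laplacian E src iv len x y * w y) = v x)
      in (\<Sum>x\<in>V. u x * w x))"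

end

theory Submission
  imports Defs "HOL-Library.Function_Algebras"
begin

definition sc :: "rat \<Rightarrow> ('a \<Rightarrow> rat) \<Rightarrow> ('a \<Rightarrow> rat)" where
  "sc c g = (\<lambda>x. c * g x)"

lemma vs_sc: "vector_space sc"
  by unfold_locales (auto simp: sc_def fun_eq_iff algebra_simps)

lemma sum_fun_apply: "finite A \<Longrightarrow> (\<Sum>i\<in>A. F i) x = (\<Sum>i\<in>A. F i x)"
  for F :: "'i \<Rightarrow> 'a \<Rightarrow> rat"
  by (induction A rule: finite_induct) auto

lemma fin_inj_surj:
  fixes f :: "('a \<Rightarrow> rat) \<Rightarrow> ('a \<Rightarrow> rat)" and X :: "'a set"
  defines "SX \<equiv> {g. \<forall>x. x \<notin> X \<longrightarrow> g x = 0}"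
  assumes finX: "finite X"
    and add: "\<And>g h. f (g + h) = f g + f h"
    and scl: "\<And>c g. f (sc c g) = sc c (f g)"
    and maps: "\<And>g. f g \<in> SX"
    and inj: "\<And>g. g \<in> SX \<Longrightarrow> f g = 0 \<Longrightarrow> g = 0"
    and y: "y \<in> SX"
  shows "\<exists>g\<in>SX. f g = y"
proof -
  interpret vs: vector_space sc by (rule vs_sc)
  interpret lin: Vector_Spaces.linear sc sc f
    by (intro linear_module_homI) (simp add: module_hom_def module_hom_axioms_def vs_sc[unfolded module_iff_vector_space[symmetric]] add scl)
  define dl where "dl = (\<lambda>x::'a. \<lambda>y. if y = x then (1::rat) else 0)"
  define B where "B = dl ` X"
  have injdl: "inj dl" unfolding inj_def dl_def fun_eq_iff by (metis zero_neq_one)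
  have finB: "finite B" using finX B_def by simp
  have cardB: "card B = card X" unfolding B_def using injdl by (simp add: card_image inj_on_def inj_def)
  have subSX: "vs.subspace SX"
    unfolding vs.subspace_def SX_def by (auto simp: sc_def)
  have spanB: "vs.span B = SX"
  proof
    show "vs.span B \<subseteq> SX"
      by (rule vs.span_minimal[OF _ subSX]) (auto simp: B_def dl_def SX_def)
    show "SX \<subseteq> vs.span B"
    proof
      fix g assume g: "g \<in> SX"
      have "g = (\<Sum>x\<in>X. sc (g x) (dl x))"
      proof
        fix z
        show "g z = (\<Sum>x\<in>X. sc (g x) (dl x)) z"
          using g finX by (cases "z \<in> X") (auto simp: sum_fun_apply sc_def dl_def SX_def if_distrib cong: if_cong)
      qed
      also have "\<dots> \<in> vs.span B"
        by (intro vs.span_sum vs.span_scale vs.span_base) (auto simp: B_def)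
      finally show "g \<in> vs.span B" .
    qed
  qed
  have indB: "vs.independent B"
  proof
    assume "vs.dependent B"
    then obtain u where u: "\<exists>v\<in>B. u v \<noteq> 0" "(\<Sum>v\<in>B. sc (u v) v) = 0"
      using vs.dependent_finite[OF finB] by blast
    then obtain x0 where x0: "x0 \<in> X" "u (dl x0) \<noteq> 0" by (auto simp: B_def)
    have "0 = (\<Sum>v\<in>B. sc (u v) v) x0" using u by simp
    also have "\<dots> = (\<Sum>v\<in>B. if v = dl x0 then u v else 0)"
      unfolding sum_fun_apply[OF finB]
      by (rule sum.cong) (auto simp: B_def sc_def dl_def split: if_splits)
    also have "\<dots> = u (dl x0)" using x0 finB by (simp add: B_def)
    finally show False using x0 by simp
  qed
  have injf: "inj_on f SX"
    using lin.inj_on_iff_eq_0[OF subSX] inj by blast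
  have indfB: "vs.independent (f ` B)"
    by (rule lin.independent_injective_image[OF indB]) (simp add: spanB injf)
  have cardfB: "card (f ` B) = card B"
    by (rule card_image) (rule inj_on_subset[OF injf], auto simp: spanB[symmetric] intro: vs.span_base)
  have "SX \<subseteq> vs.span (f ` B)"
  proof
    fix a assume a: "a \<in> SX"
    show "a \<in> vs.span (f ` B)"
    proof (rule ccontr)
      assume na: "a \<notin> vs.span (f ` B)"
      have i2: "vs.independent (insert a (f ` B))" by (rule vs.independent_insertI[OF na indfB])
      have anot: "a \<notin> f ` B" using na vs.span_base by blast
      have "vs.dim (insert a (f ` B)) = card (insert a (f ` B))" by (rule vs.dim_eq_card_independent[OF i2])
      also have "\<dots> = Suc (card B)" using anot finB cardfB by simp
      finally have d1: "vs.dim (insert a (f ` B)) = Suc (card B)" .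
      have "insert a (f ` B) \<subseteq> vs.span B" using a maps spanB by auto
      then have "vs.dim (insert a (f ` B)) \<le> card B" by (rule vs.dim_le_card[OF _ finB])
      with d1 show False by simp
    qed
  qed
  also have "vs.span (f ` B) = f ` SX" using lin.span_image spanB by simp
  finally show ?thesis using y by blast
qed


definition Lap :: "'v set \<Rightarrow> 'e set \<Rightarrow> ('e \<Rightarrow> 'v) \<Rightarrow> ('e \<Rightarrow> 'e) \<Rightarrow> ('e \<Rightarrow> rat) \<Rightarrow> ('v \<Rightarrow> rat) \<Rightarrow> 'v \<Rightarrow> rat" where
  "Lap V E src iv len g x = (\<Sum>y\<in>V. laplacian E src iv len x y * g y)"

context
  fixes V :: "'v set" and E :: "'e set" and src :: "'e \<Rightarrow> 'v" and iv :: "'e \<Rightarrow> 'e"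
    and len :: "'e \<Rightarrow> rat"
  assumes G: "rmgraph V E src iv len"
begin

lemma finV: "finite V" and finE: "finite E" and Vne: "V \<noteq> {}"
  and srcV: "e \<in> E \<Longrightarrow> src e \<in> V" and ivE: "e \<in> E \<Longrightarrow> iv e \<in> E"
  and ivv: "e \<in> E \<Longrightarrow> iv (iv e) = e" and ivne: "e \<in> E \<Longrightarrow> iv e \<noteq> e"
  and lenpos: "e \<in> E \<Longrightarrow> len e > 0" and leniv: "e \<in> E \<Longrightarrow> len (iv e) = len e"
  and conn: "u \<in> V \<Longrightarrow> w \<in> V \<Longrightarrow> (u, w) \<in> {(src e, tgt src iv e) | e. e \<in> E}\<^sup>*"
  using G unfolding rmgraph_def by auto

lemma tgtV: "e \<in> E \<Longrightarrow> tgt src iv e \<in> V"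
  unfolding tgt_def using srcV ivE by blast

lemma tgt_iv: "e \<in> E \<Longrightarrow> tgt src iv (iv e) = src e"
  unfolding tgt_def using ivv by simp

lemma src_iv: "tgt src iv e = src (iv e)"
  unfolding tgt_def by simp

lemma lap_form:
  assumes x: "x \<in> V"
  shows "Lap V E src iv len g x = (\<Sum>e\<in>E. if src e = x then (g x - g (tgt src iv e)) / len e else 0)"
proof -
  let ?t = "tgt src iv"
  have L: "laplacian E src iv len x y = (\<Sum>e\<in>E. if src e = x then
        ((if y = x \<and> ?t e \<noteq> x then 1 else 0) - (if ?t e = y \<and> y \<noteq> x then 1 else 0)) / len e else 0)" for y
  proof (cases "y = x")
    case True
    then show ?thesis unfolding laplacian_def
      by (simp add: sum.inter_filter[OF finE] conj_commute) (rule sum.cong, auto)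
  next
    case False
    then show ?thesis unfolding laplacian_def
      by (simp add: sum.inter_filter[OF finE] sum_negf[symmetric]) (rule sum.cong, auto)
  qed
  have "Lap V E src iv len g x = (\<Sum>y\<in>V. \<Sum>e\<in>E. (if src e = x then
        ((if y = x \<and> ?t e \<noteq> x then 1 else 0) - (if ?t e = y \<and> y \<noteq> x then 1 else 0)) / len e else 0) * g y)"
    unfolding Lap_def L by (simp add: sum_distrib_right)
  also have "\<dots> = (\<Sum>e\<in>E. \<Sum>y\<in>V. (if src e = x then
        ((if y = x \<and> ?t e \<noteq> x then 1 else 0) - (if ?t e = y \<and> y \<noteq> x then 1 else 0)) / len e else 0) * g y)"
    by (rule sum.swap)
  also have "\<dots> = (\<Sum>e\<in>E. if src e = x then (g x - g (?t e)) / len e else 0)"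
  proof (rule sum.cong[OF refl])
    fix e assume e: "e \<in> E"
    show "(\<Sum>y\<in>V. (if src e = x then
        ((if y = x \<and> ?t e \<noteq> x then 1 else 0) - (if ?t e = y \<and> y \<noteq> x then 1 else 0)) / len e else 0) * g y)
        = (if src e = x then (g x - g (?t e)) / len e else 0)"
    proof (cases "src e = x")
      case True
      show ?thesis
      proof (cases "?t e = x")
        case True
        then show ?thesis using \<open>src e = x\<close> by (auto intro!: sum.neutral)
      next
        case False
        have "(\<Sum>y\<in>V. (((if y = x \<and> ?t e \<noteq> x then 1 else 0) - (if ?t e = y \<and> y \<noteq> x then 1 else 0)) / len e) * g y)
          = (\<Sum>y\<in>V. (if y = x then g y / len e else 0) - (if y = ?t e then g y / len e else 0))"
          using False by (intro sum.cong) auto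
        also have "\<dots> = (g x - g (?t e)) / len e"
          using x tgtV[OF e] finV by (simp add: sum_subtractf diff_divide_distrib)
        finally show ?thesis using True by simp
      qed
    qed simp
  qed
  finally show ?thesis .
qed

lemma energy:
  "(\<Sum>x\<in>V. Lap V E src iv len g x * f x)
     = (\<Sum>e\<in>E. (g (tgt src iv e) - g (src e)) * (f (tgt src iv e) - f (src e)) / len e) / 2"
proof -
  let ?t = "tgt src iv"
  let ?A = "(\<Sum>e\<in>E. (g (src e) - g (?t e)) / len e * f (src e))"
  have "(\<Sum>x\<in>V. Lap V E src iv len g x * f x)
      = (\<Sum>x\<in>V. \<Sum>e\<in>E. (if src e = x then (g x - g (?t e)) / len e * f x else 0))"
    by (intro sum.cong refl) (simp add: lap_form sum_distrib_right, intro sum.cong refl, simp)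
  also have "\<dots> = (\<Sum>e\<in>E. \<Sum>x\<in>V. (if src e = x then (g x - g (?t e)) / len e * f x else 0))"
    by (rule sum.swap)
  also have "\<dots> = ?A"
    using finV srcV by (intro sum.cong refl) simp
  finally have 1: "(\<Sum>x\<in>V. Lap V E src iv len g x * f x) = ?A" .
  have 2: "?A = (\<Sum>e\<in>E. (g (?t e) - g (src e)) / len e * f (?t e))"
    by (rule sum.reindex_bij_witness[of _ iv iv]) (auto simp: ivv ivE tgt_iv leniv src_iv)
  have "?A = (?A + ?A) / 2" by simp
  also have "\<dots> = (\<Sum>e\<in>E. (g (src e) - g (?t e)) / len e * f (src e) + (g (?t e) - g (src e)) / len e * f (?t e)) / 2"
    by (subst (2) 2) (simp add: sum.distrib)
  also have "\<dots> = (\<Sum>e\<in>E. (g (?t e) - g (src e)) * (f (?t e) - f (src e)) / len e) / 2"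
    by (intro arg_cong[where f="\<lambda>z. z / 2"] sum.cong refl) (simp add: add_divide_distrib[symmetric] algebra_simps)
  finally show ?thesis using 1 by simp
qed

lemma lap_sum0: "(\<Sum>x\<in>V. Lap V E src iv len g x) = 0"
  using energy[of g "\<lambda>_. 1"] by simp

lemma lap_ker:
  assumes h: "\<forall>x\<in>V. Lap V E src iv len h x = 0" and u: "u \<in> V" and w: "w \<in> V"
  shows "h u = h w"
proof -
  let ?t = "tgt src iv"
  have "(\<Sum>e\<in>E. (h (?t e) - h (src e)) * (h (?t e) - h (src e)) / len e) = 0"
    using energy[of h h] h by simp
  then have z: "\<forall>e\<in>E. (h (?t e) - h (src e)) * (h (?t e) - h (src e)) / len e = 0"
    using finE lenpos by (subst (asm) sum_nonneg_eq_0_iff) (auto intro: divide_nonneg_pos)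
  have edge: "h (src e) = h (?t e)" if "e \<in> E" for e
    using z that lenpos[OF that] by auto
  have "(u, w) \<in> {(src e, ?t e) | e. e \<in> E}\<^sup>*" using conn u w by blast
  then show ?thesis
  proof (induction rule: rtrancl_induct)
    case (step y z)
    then show ?case using edge by auto
  qed simp
qed

lemma lap_exists:
  assumes v: "(\<Sum>x\<in>V. v x) = 0"
  shows "\<exists>g. \<forall>x\<in>V. Lap V E src iv len g x = v x"
proof -
  obtain x0 where x0: "x0 \<in> V" using Vne by blast
  define X where "X = V - {x0}"
  define F where "F = (\<lambda>h. \<lambda>x. if x \<in> X then Lap V E src iv len h x else 0)"
  define y where "y = (\<lambda>x. if x \<in> X then v x else 0)"
  have "\<exists>g\<in>{g. \<forall>x. x \<notin> X \<longrightarrow> g x = 0}. F g = y"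
  proof (rule fin_inj_surj)
    show "finite X" using finV X_def by simp
    show "F (g + h) = F g + F h" for g h
      by (auto simp: F_def Lap_def fun_eq_iff distrib_left sum.distrib)
    show "F (sc c g) = sc c (F g)" for c g
      by (auto simp: F_def Lap_def fun_eq_iff sc_def sum_distrib_left mult.left_commute)
    show "F g \<in> {g. \<forall>x. x \<notin> X \<longrightarrow> g x = 0}" for g by (simp add: F_def)
    show "y \<in> {g. \<forall>x. x \<notin> X \<longrightarrow> g x = 0}" by (simp add: y_def)
    fix g assume g: "g \<in> {g. \<forall>x. x \<notin> X \<longrightarrow> g x = 0}" and Fg: "F g = 0"
    have LX: "Lap V E src iv len g x = 0" if "x \<in> X" for x
      using Fg that unfolding F_def by (metis (mono_tags) zero_fun_def)
    have "(\<Sum>x\<in>V. Lap V E src iv len g x) = Lap V E src iv len g x0 + (\<Sum>x\<in>X. Lap V E src iv len g x)"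
      unfolding X_def using finV x0 by (simp add: sum.remove)
    then have "Lap V E src iv len g x0 = 0" using lap_sum0 LX by simp
    then have L0: "\<forall>x\<in>V. Lap V E src iv len g x = 0" using LX X_def by auto
    have "g x0 = 0" using g X_def by simp
    then have "g x = 0" if "x \<in> V" for x using lap_ker[OF L0 that x0] by simp
    then show "g = 0" using g X_def by (auto simp: fun_eq_iff)
  qed
  then obtain g where Fg: "F g = y" by blast
  have LX: "Lap V E src iv len g x = v x" if "x \<in> X" for x
    using Fg that unfolding F_def y_def by (metis (mono_tags))
  have s1: "(\<Sum>x\<in>V. Lap V E src iv len g x) = Lap V E src iv len g x0 + (\<Sum>x\<in>X. Lap V E src iv len g x)"
    unfolding X_def using finV x0 by (simp add: sum.remove)
  have s2: "(\<Sum>x\<in>V. v x) = v x0 + (\<Sum>x\<in>X. v x)"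
    unfolding X_def using finV x0 by (simp add: sum.remove)
  have "(\<Sum>x\<in>X. Lap V E src iv len g x) = (\<Sum>x\<in>X. v x)" using LX by simp
  then have "Lap V E src iv len g x0 = v x0" using s1 s2 lap_sum0 v by simp
  then show ?thesis using LX X_def by (metis Diff_iff singletonD)
qed

lemma bdry_sum:
  assumes e: "e \<in> E"
  shows "(\<Sum>x\<in>V. bdry_edge src iv e x * f x) = f (tgt src iv e) - f (src e)"
proof -
  have "(\<Sum>x\<in>V. bdry_edge src iv e x * f x)
      = (\<Sum>x\<in>V. (if x = tgt src iv e then f x else 0) - (if x = src e then f x else 0))"
    unfolding bdry_edge_def by (intro sum.cong refl) (simp add: left_diff_distrib)
  also have "\<dots> = f (tgt src iv e) - f (src e)"
    using finV tgtV[OF e] srcV[OF e] by (simp add: sum_subtractf)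
  finally show ?thesis .
qed

lemma bdry_out: "e \<in> E \<Longrightarrow> x \<notin> V \<Longrightarrow> bdry_edge src iv e x = 0"
  unfolding bdry_edge_def using tgtV srcV by auto

lemma bdry_iv: "e \<in> E \<Longrightarrow> bdry_edge src iv (iv e) x = - bdry_edge src iv e x"
  unfolding bdry_edge_def tgt_def using ivv by simp

lemma hp_eq:
  assumes e1: "e1 \<in> E" and e2: "e2 \<in> E"
    and g: "\<forall>x\<in>V. Lap V E src iv len g x = bdry_edge src iv e1 x"
  shows "height_pairing V E src iv len (bdry_edge src iv e1) (bdry_edge src iv e2)
     = g (tgt src iv e2) - g (src e2)"
proof -
  define w where "w = (SOME w. \<forall>x\<in>V. (\<Sum>y\<in>V. laplacian E src iv len x y * w y) = bdry_edge src iv e2 x)"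
  have ex: "\<exists>w. \<forall>x\<in>V. (\<Sum>y\<in>V. laplacian E src iv len x y * w y) = bdry_edge src iv e2 x"
    using lap_exists[of "bdry_edge src iv e2"] bdry_sum[OF e2, of "\<lambda>_. 1"] unfolding Lap_def by simp
  have w: "\<forall>x\<in>V. Lap V E src iv len w x = bdry_edge src iv e2 x"
    using someI_ex[OF ex] unfolding w_def Lap_def .
  have "height_pairing V E src iv len (bdry_edge src iv e1) (bdry_edge src iv e2)
      = (\<Sum>x\<in>V. bdry_edge src iv e1 x * w x)"
    unfolding height_pairing_def Let_def w_def ..
  also have "\<dots> = (\<Sum>x\<in>V. Lap V E src iv len g x * w x)" using g by simp
  also have "\<dots> = (\<Sum>x\<in>V. Lap V E src iv len w x * g x)"
    unfolding energy by (simp add: mult.commute)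
  also have "\<dots> = (\<Sum>x\<in>V. bdry_edge src iv e2 x * g x)" using w by simp
  also have "\<dots> = g (tgt src iv e2) - g (src e2)" by (rule bdry_sum[OF e2])
  finally show ?thesis .
qed

lemma Nmap_eq:
  assumes e: "e \<in> E"
    and g: "\<forall>x\<in>V. Lap V E src iv len g x = bdry_edge src iv e x"
  defines "c \<equiv> (\<lambda>e'. if e' \<in> E then (if e' = e then 1 / len e else 0) - (if e' = iv e then 1 / len e else 0)
       - (g (tgt src iv e') - g (src e')) / (len e * len e') else 0)"
  shows "Nmap E src iv len (edge_dual e) = c \<and> c \<in> chains E iv"
proof -
  let ?t = "tgt src iv"
  have ive: "iv e \<noteq> e" using ivne[OF e] .
  have cch: "c \<in> chains E iv"
    unfolding chains_def
  proof (intro CollectI conjI ballI allI impI)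
    fix e' assume e': "e' \<in> E"
    have "iv e' = e \<longleftrightarrow> e' = iv e" using ivv e e' by metis
    moreover have "iv e' = iv e \<longleftrightarrow> e' = e" using ivv e e' by metis
    ultimately show "c (iv e') = - c e'"
      unfolding c_def using e' ivE[OF e'] leniv[OF e'] tgt_iv[OF e'] src_iv[of e'] ive
      by (auto simp: add_divide_distrib[symmetric] minus_divide_left)
  qed (simp add: c_def)
  have key: "(\<Sum>e'\<in>E. (g (?t e') - g (src e')) / len e' * bdry_edge src iv e' x) = 2 * bdry_edge src iv e x" for x
  proof (cases "x \<in> V")
    case True
    have "bdry_edge src iv e x = (\<Sum>y\<in>V. Lap V E src iv len g y * (if x = y then 1 else 0))"
      using True finV g by (simp add: if_distrib cong: if_cong)
    also have "\<dots> = (\<Sum>e'\<in>E. (g (?t e') - g (src e')) / len e' * bdry_edge src iv e' x) / 2"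
      unfolding energy by (simp add: bdry_edge_def mult.commute)
    finally show ?thesis by simp
  next
    case False
    then show ?thesis using bdry_out e by simp
  qed
  have bc: "bdry E src iv c x = 0" for x
  proof -
    have "(\<Sum>e'\<in>E. c e' * bdry_edge src iv e' x)
      = (\<Sum>e'\<in>E. (if e' = e then bdry_edge src iv e' x / len e else 0) - (if e' = iv e then bdry_edge src iv e' x / len e else 0)
          - (g (?t e') - g (src e')) / len e' * bdry_edge src iv e' x / len e)"
      unfolding c_def by (intro sum.cong refl) (auto simp: field_simps)
    also have "\<dots> = bdry_edge src iv e x / len e - bdry_edge src iv (iv e) x / len e
          - (\<Sum>e'\<in>E. (g (?t e') - g (src e')) / len e' * bdry_edge src iv e' x) / len e"
      using finE e ivE[OF e] by (simp add: sum_subtractf sum_divide_distrib)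
    also have "\<dots> = 0" unfolding key bdry_iv[OF e] by simp
    finally show ?thesis unfolding bdry_def by simp
  qed
  have cH: "c \<in> H1 E src iv" unfolding H1_def using cch bc by simp
  have pair: "edge_pairing E len c w = edge_dual e w" if w: "w \<in> H1 E src iv" for w
  proof -
    have wch: "\<forall>e'\<in>E. w (iv e') = - w e'" and wb: "\<And>x. bdry E src iv w x = 0"
      using w unfolding H1_def chains_def by auto
    have z: "(\<Sum>e'\<in>E. (g (?t e') - g (src e')) * w e') = 0"
    proof -
      have "(\<Sum>e'\<in>E. (g (?t e') - g (src e')) * w e') = (\<Sum>e'\<in>E. \<Sum>x\<in>V. w e' * (bdry_edge src iv e' x * g x))"
        by (intro sum.cong refl) (simp add: sum_distrib_left[symmetric] bdry_sum[symmetric] mult.commute)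
      also have "\<dots> = (\<Sum>x\<in>V. g x * (\<Sum>e'\<in>E. w e' * bdry_edge src iv e' x))"
        by (subst sum.swap) (simp add: sum_distrib_left mult_ac)
      also have "\<dots> = 0" using wb unfolding bdry_def by simp
      finally show ?thesis .
    qed
    have "(\<Sum>e'\<in>E. len e' * c e' * w e') = (\<Sum>e'\<in>E. (if e' = e then w e' else 0) - (if e' = iv e then w e' else 0)
          - (g (?t e') - g (src e')) * w e' / len e)"
    proof (rule sum.cong[OF refl])
      fix e' assume e': "e' \<in> E"
      have p1: "len e' > 0" "len e > 0" using lenpos e' e by auto
      show "len e' * c e' * w e' = (if e' = e then w e' else 0) - (if e' = iv e then w e' else 0)
          - (g (?t e') - g (src e')) * w e' / len e"
        unfolding c_def using p1 e' ive leniv[OF e]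
        by (cases "e' = e"; cases "e' = iv e") (auto simp: field_simps)
    qed
    also have "\<dots> = w e - w (iv e) - (\<Sum>e'\<in>E. (g (?t e') - g (src e')) * w e') / len e"
      using finE e ivE[OF e] by (simp add: sum_subtractf sum_divide_distrib)
    also have "\<dots> = 2 * w e" using z wch e by simp
    finally show ?thesis unfolding edge_pairing_def edge_dual_def by simp
  qed
  have "Nmap E src iv len (edge_dual e) = c" unfolding Nmap_def
  proof (rule the_equality)
    show "c \<in> H1 E src iv \<and> (\<forall>w\<in>H1 E src iv. edge_pairing E len c w = edge_dual e w)"
      using cH pair by blast
    fix c' assume c': "c' \<in> H1 E src iv \<and> (\<forall>w\<in>H1 E src iv. edge_pairing E len c' w = edge_dual e w)"
    define d where "d = (\<lambda>x. c' x - c x)"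
    have c'ch: "c' \<in> chains E iv" and c'b: "\<And>x. bdry E src iv c' x = 0" using c' unfolding H1_def by auto
    have dH: "d \<in> H1 E src iv"
    proof -
      have "d \<in> chains E iv" using c'ch cch unfolding chains_def d_def by auto
      moreover have "bdry E src iv d x = 0" for x
      proof -
        have "bdry E src iv d x = bdry E src iv c' x - bdry E src iv c x"
          unfolding bdry_def d_def by (simp add: left_diff_distrib sum_subtractf diff_divide_distrib)
        then show ?thesis using c'b bc by simp
      qed
      ultimately show ?thesis unfolding H1_def by simp
    qed
    have "edge_pairing E len d d = edge_pairing E len c' d - edge_pairing E len c d"
      unfolding edge_pairing_def diff_divide_distrib[symmetric] sum_subtractf[symmetric] d_def
      by (rule arg_cong[where f="\<lambda>z. z / 2"], rule sum.cong, auto simp: algebra_simps)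
    also have "\<dots> = 0" using c' pair dH by simp
    finally have s0: "(\<Sum>e'\<in>E. len e' * d e' * d e') = 0" unfolding edge_pairing_def by simp
    have nn: "0 \<le> len e' * d e' * d e'" if "e' \<in> E" for e'
      using mult_nonneg_nonneg[OF less_imp_le[OF lenpos[OF that]] zero_le_square[of "d e'"]] by (simp only: mult.assoc)
    have "\<forall>e'\<in>E. len e' * d e' * d e' = 0"
    proof -
      have "(\<Sum>e'\<in>E. len e' * d e' * d e') = 0 \<longleftrightarrow> (\<forall>e'\<in>E. len e' * d e' * d e' = 0)"
        by (rule sum_nonneg_eq_0_iff[OF finE]) (rule nn)
      with s0 show ?thesis by simp
    qed
    then have dz: "d e' = 0" if "e' \<in> E" for e'
      using lenpos[OF that] that by (metis less_irrefl mult_eq_0_iff)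
    show "c' = c"
    proof
      fix x
      show "c' x = c x"
      proof (cases "x \<in> E")
        case True
        then show ?thesis using dz[OF True] unfolding d_def by simp
      next
        case False
        then show ?thesis using c'ch cch unfolding chains_def by simp
      qed
    qed
  qed
then show ?thesis using cch by simp
qed


end

theorem corollary7p3:
  fixes V :: "'v set" and E :: "'e set" and src :: "'e \<Rightarrow> 'v" and iv :: "'e \<Rightarrow> 'e"
    and len :: "'e \<Rightarrow> rat" and e :: 'e
  assumes "rmgraph V E src iv len"
    and "e \<in> E"
  shows "Nmap E src iv len (edge_dual e) \<in> chains E iv
    \<and> Nmap E src iv len (edge_dual e) e
        = 1 / len e - height_pairing V E src iv len (bdry_edge src iv e) (bdry_edge src iv e) / (len e)^2
    \<and> (\<forall>e'\<in>E. e' \<noteq> e \<and> e' \<noteq> iv e \<longrightarrow>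
         Nmap E src iv len (edge_dual e) e'
           = - height_pairing V E src iv len (bdry_edge src iv e) (bdry_edge src iv e') / (len e * len e'))"
proof -
  note G = assms(1) and e = assms(2)
  obtain g where g: "\<forall>x\<in>V. Lap V E src iv len g x = bdry_edge src iv e x"
    using lap_exists[OF G, of "bdry_edge src iv e"] bdry_sum[OF G e, of "\<lambda>_. 1"] by auto
  define c where "c = (\<lambda>e'. if e' \<in> E then (if e' = e then 1 / len e else 0) - (if e' = iv e then 1 / len e else 0)
       - (g (tgt src iv e') - g (src e')) / (len e * len e') else 0)"
  have N: "Nmap E src iv len (edge_dual e) = c" and cch: "c \<in> chains E iv"
    using Nmap_eq[OF G e g] unfolding c_def by auto
  have hp: "height_pairing V E src iv len (bdry_edge src iv e) (bdry_edge src iv e') = g (tgt src iv e') - g (src e')"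
    if "e' \<in> E" for e'
    using hp_eq[OF G e that g] .
  have ive: "iv e \<noteq> e" using ivne[OF G e] .
  show ?thesis
  proof (intro conjI ballI impI)
    show "Nmap E src iv len (edge_dual e) \<in> chains E iv" using N cch by simp
    show "Nmap E src iv len (edge_dual e) e
        = 1 / len e - height_pairing V E src iv len (bdry_edge src iv e) (bdry_edge src iv e) / (len e)^2"
      unfolding N hp[OF e] c_def using e ive by (simp add: power2_eq_square)
    fix e' assume e': "e' \<in> E" and ne: "e' \<noteq> e \<and> e' \<noteq> iv e"
    show "Nmap E src iv len (edge_dual e) e'
           = - height_pairing V E src iv len (bdry_edge src iv e) (bdry_edge src iv e') / (len e * len e')"
      unfolding N hp[OF e'] c_def using e' ne by (simp add: minus_divide_left)
  qed
qed

end
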